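(* Let $V$ be a braided vector space of diagonal type over a field $F$ of characteristic zero with basis $x_1,\dots,x_n$ and braiding $C(x_i\otimes x_j)=p_{i,j}x_j\otimes x_i$, and let $\mathfrak B(V)$ be its Nichols algebra. Let $i\neq j$. Then in $\mathfrak B(V)$: (i) $[x_i,x_j]_L=0$ if and only if $p_{i,j}=p_{j,i}=1$; (ii) $[x_i,x_j]_R=0$ if and only if $p_{i,j}=p_{j,i}=1$, or $p_{i,j}=\omega,\ p_{j,i}=\omega^2$, or $p_{i,j}=\omega^2,\ p_{j,i}=\omega$, where $\omega$ is a primitive cube root of unity.
   Context: $\mathfrak B(V)$ is the quotient of $T(V)$ by $\bigoplus_{m\ge2}\ker S_m$ (kernels of quantum symmetrizers). For generators, $[x_i,x_j]_L=p_{j,i}x_ix_j-p_{i,j}x_jx_i$ and $[x_i,x_j]_R=p_{i,j}x_ix_j-p_{j,i}x_jx_i$. *)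

theory Defs
  imports "HOL-Combinatorics.Permutations"
begin

text \<open>Tensor algebra T(V) of a vector space V with basis x_i (i ranging over a finite
index type 'i), over a field 'a: elements are finitely supported functions from words
(lists of indices) to coefficients; the word w stands for x_{w!0} x_{w!1} ... \<close>

definition tgen :: "'i \<Rightarrow> ('i list \<Rightarrow> 'a::field)" where
  "tgen i = (\<lambda>w. if w = [i] then 1 else 0)"

definition tmul :: "('i list \<Rightarrow> 'a::field) \<Rightarrow> ('i list \<Rightarrow> 'a) \<Rightarrow> ('i list \<Rightarrow> 'a)" where
  "tmul u v = (\<lambda>w. \<Sum>k\<le>length w. u (take k w) * v (drop k w))"

definition tsmul :: "'a::field \<Rightarrow> ('i list \<Rightarrow> 'a) \<Rightarrow> ('i list \<Rightarrow> 'a)" where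
  "tsmul c u = (\<lambda>w. c * u w)"

definition thom :: "nat \<Rightarrow> ('i list \<Rightarrow> 'a::field) \<Rightarrow> ('i list \<Rightarrow> 'a)" where
  "thom m u = (\<lambda>w. if length w = m then u w else 0)"

text \<open>Diagonal braiding C(x_i \<otimes> x_j) = p i j x_j \<otimes> x_i.  The Matsumoto lift of a
permutation \<sigma> of the m tensor positions acts on the basis word w by moving the letter
at position a to position \<sigma> a, with coefficient the product of p (w!a) (w!b) over the
pairs a < b inverted by \<sigma>.\<close>

definition perm_word :: "(nat \<Rightarrow> nat) \<Rightarrow> 'i list \<Rightarrow> 'i list" where
  "perm_word \<sigma> w = map (\<lambda>b. w ! (inv \<sigma> b)) [0..<length w]"

definition braid_coef :: "('i \<Rightarrow> 'i \<Rightarrow> 'a::field) \<Rightarrow> (nat \<Rightarrow> nat) \<Rightarrow> 'i list \<Rightarrow> 'a" where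
  "braid_coef p \<sigma> w =
     (\<Prod>(a,b)\<in>{(a,b). a < b \<and> b < length w \<and> \<sigma> b < \<sigma> a}. p (w ! a) (w ! b))"

definition qsymm :: "('i::finite \<Rightarrow> 'i \<Rightarrow> 'a::field) \<Rightarrow> nat \<Rightarrow> ('i list \<Rightarrow> 'a) \<Rightarrow> ('i list \<Rightarrow> 'a)" where
  "qsymm p m u = (\<lambda>v. \<Sum>w\<in>{w. length w = m}. \<Sum>\<sigma>\<in>{\<sigma>. \<sigma> permutes {..<m}}.
       u w * braid_coef p \<sigma> w * (if perm_word \<sigma> w = v then 1 else 0))"

text \<open>u is zero in the Nichols algebra B(V) = T(V) / \<Oplus>_{m\<ge>2} ker S_m, i.e. u lies in
that graded subspace.\<close>
definition nichols_zero :: "('i::finite \<Rightarrow> 'i \<Rightarrow> 'a::field) \<Rightarrow> ('i list \<Rightarrow> 'a) \<Rightarrow> bool" where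
  "nichols_zero p u \<longleftrightarrow> finite {w. u w \<noteq> 0} \<and> (\<forall>w. length w < 2 \<longrightarrow> u w = 0) \<and>
     (\<forall>m\<ge>2. qsymm p m (thom m u) = (\<lambda>_. 0))"

definition bracketL :: "('i \<Rightarrow> 'i \<Rightarrow> 'a::field) \<Rightarrow> 'i \<Rightarrow> 'i \<Rightarrow> ('i list \<Rightarrow> 'a)" where
  "bracketL p i j = (\<lambda>w. tsmul (p j i) (tmul (tgen i) (tgen j)) w
                        - tsmul (p i j) (tmul (tgen j) (tgen i)) w)"

definition bracketR :: "('i \<Rightarrow> 'i \<Rightarrow> 'a::field) \<Rightarrow> 'i \<Rightarrow> 'i \<Rightarrow> ('i list \<Rightarrow> 'a)" where
  "bracketR p i j = (\<lambda>w. tsmul (p i j) (tmul (tgen i) (tgen j)) w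
                        - tsmul (p j i) (tmul (tgen j) (tgen i)) w)"

definition primitive_cube_root :: "'a::field \<Rightarrow> bool" where
  "primitive_cube_root \<omega> \<longleftrightarrow> \<omega> ^ 3 = 1 \<and> \<omega> \<noteq> 1"

end

theory Submission
  imports Defs
begin

definition tau2 :: "nat \<Rightarrow> nat" where
  "tau2 x = (if x = 0 then 1 else if x = 1 then 0 else x)"

lemma tau2_inv: "inv tau2 = tau2"
  by (rule inv_unique_comp) (auto simp: tau2_def fun_eq_iff)

lemma tau2_tau2: "tau2 (tau2 x) = x"
  by (simp add: tau2_def)

lemma tau2_permutes: "tau2 permutes {..<2}"
  unfolding permutes_def
proof (intro conjI allI impI)
  fix x :: nat assume "x \<notin> {..<2}" then show "tau2 x = x" by (simp add: tau2_def)
next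
  fix y show "\<exists>!x. tau2 x = y" by (metis tau2_tau2)
qed

lemma id_ne_tau2: "id \<noteq> tau2"
  by (metis id_apply tau2_def zero_neq_one)

lemma perms2: "{\<sigma>. \<sigma> permutes {..<2::nat}} = {id, tau2}"
proof (rule set_eqI, rule iffI)
  fix \<sigma> assume "\<sigma> \<in> {\<sigma>. \<sigma> permutes {..<2::nat}}"
  hence s: "\<sigma> permutes {..<2}" by simp
  have a: "\<sigma> 0 < 2" "\<sigma> 1 < 2" using permutes_in_image[OF s] by auto
  have inj: "inj \<sigma>" using permutes_inj[OF s] .
  have out: "\<And>x. x \<ge> 2 \<Longrightarrow> \<sigma> x = x" using s unfolding permutes_def by auto
  have "\<sigma> 0 \<noteq> \<sigma> 1" using inj by (metis injD zero_neq_one)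
  then consider "\<sigma> 0 = 0" "\<sigma> 1 = 1" | "\<sigma> 0 = 1" "\<sigma> 1 = 0" using a by linarith
  then show "\<sigma> \<in> {id, tau2}"
  proof cases
    case 1
    have "\<sigma> x = x" for x
      using 1 out[of x] by (cases "x < 2") (auto simp: less_2_cases_iff)
    then have "\<sigma> = id" by (auto simp: fun_eq_iff)
    then show ?thesis by simp
  next
    case 2
    then have "\<sigma> = tau2" using out unfolding tau2_def by (auto simp: fun_eq_iff)
    then show ?thesis by simp
  qed
next
  fix \<sigma> assume "\<sigma> \<in> {id, tau2}"
  then show "\<sigma> \<in> {\<sigma>. \<sigma> permutes {..<2::nat}}" using tau2_permutes permutes_id by auto
qed

lemma len2: "length w = 2 \<longleftrightarrow> (\<exists>a b. w = [a, b])"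
  by (metis (no_types, opaque_lifting) One_nat_def length_0_conv length_Cons length_Suc_conv numeral_2_eq_2)

lemma v2: "length v = 2 \<Longrightarrow> v = [v!0, v!1]"
  by (metis len2 nth_Cons_0 nth_Cons_Suc One_nat_def)

lemma bc_id: "braid_coef p id w = 1"
proof -
  have "{(a,b). a < b \<and> b < length w \<and> b < a} = {}" by auto
  then show ?thesis unfolding braid_coef_def id_apply by (simp only: prod.empty)
qed

lemma bc_tau: "braid_coef p tau2 [a, b] = p a b"
proof -
  have "{(x,y). x < y \<and> y < length [a,b] \<and> tau2 y < tau2 x} = {(0::nat,1::nat)}"
    by (auto simp: tau2_def)
  then show ?thesis unfolding braid_coef_def by simp
qed

lemma pw_id: "perm_word id w = w"
  unfolding perm_word_def by (simp add: map_nth inv_id)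

lemma pw_tau: "perm_word tau2 [a, b] = [b, a]"
  unfolding perm_word_def tau2_inv by (simp add: upt_rec tau2_def)

lemma fin2: "finite {w::'i::finite list. length w = m}"
  using finite_lists_length_eq[of "UNIV::'i set" m] by simp

lemma S2:
  fixes p :: "'i::finite \<Rightarrow> 'i \<Rightarrow> 'a::field"
  shows "qsymm p 2 u v = (if length v = 2 then u v + p (v!1) (v!0) * u [v!1, v!0] else 0)"
proof -
  have "qsymm p 2 u v = (\<Sum>w\<in>{w. length w = 2}. u w * (if w = v then 1 else 0))
     + (\<Sum>w\<in>{w. length w = 2}. u w * braid_coef p tau2 w * (if perm_word tau2 w = v then 1 else 0))"
    unfolding qsymm_def perms2
    using id_ne_tau2 by (simp add: sum.distrib bc_id pw_id)
  also have "(\<Sum>w\<in>{w. length w = 2}. u w * (if w = v then 1 else 0)) = (if length v = 2 then u v else 0)"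
    by (simp add: fin2 sum.delta' mult.commute[of "u _"] if_distrib cong: if_cong)
  also have "(\<Sum>w\<in>{w. length w = 2}. u w * braid_coef p tau2 w * (if perm_word tau2 w = v then 1 else 0))
     = (\<Sum>w\<in>{w. length w = 2}. if w = [v!1, v!0] \<and> length v = 2 then u [v!1, v!0] * p (v!1) (v!0) else 0)"
  proof (rule sum.cong[OF refl])
    fix w assume "w \<in> {w::'i list. length w = 2}"
    then obtain a b where w: "w = [a,b]" by (meson len2 mem_Collect_eq)
    show "u w * braid_coef p tau2 w * (if perm_word tau2 w = v then 1 else 0)
       = (if w = [v!1, v!0] \<and> length v = 2 then u [v!1, v!0] * p (v!1) (v!0) else 0)"
      unfolding w bc_tau pw_tau using v2[of v] by (cases "length v = 2") auto
  qed
  also have "\<dots> = (if length v = 2 then u [v!1, v!0] * p (v!1) (v!0) else 0)"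
    by (simp add: fin2 sum.delta')
  finally show ?thesis by (auto simp: algebra_simps)
qed

lemma tmul_gen: "tmul (tgen i) (tgen j) w = (if w = [i,j] then 1 else 0)"
proof (cases "w = [i,j]")
  case True
  have "{..length w} = {0,1,2}" using True by auto
  then show ?thesis using True unfolding tmul_def tgen_def by simp
next
  case False
  have "(\<Sum>k\<le>length w. tgen i (take k w) * tgen j (drop k w)) = 0"
  proof (rule sum.neutral, rule ballI)
    fix k
    have "\<not> (take k w = [i] \<and> drop k w = [j])"
      using False by (metis append_Cons append_Nil append_take_drop_id)
    then show "tgen i (take k w) * tgen j (drop k w) = 0" unfolding tgen_def by auto
  qed
  then show ?thesis using False unfolding tmul_def by simp
qed

lemma qsymm_zero: "qsymm p m (\<lambda>_. 0) = (\<lambda>_. 0)"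
  unfolding qsymm_def by simp

lemma nz_char:
  fixes p :: "'i::finite \<Rightarrow> 'i \<Rightarrow> 'a::field"
  assumes ij: "i \<noteq> j"
    and u: "u = (\<lambda>w. (if w = [i,j] then c1 else 0) - (if w = [j,i] then c2 else 0))"
  shows "nichols_zero p u \<longleftrightarrow> c1 - p j i * c2 = 0 \<and> p i j * c1 - c2 = 0"
proof -
  have uij: "u [i,j] = c1" and uji: "u [j,i] = - c2" using ij by (simp_all add: u)
  have uo: "u w = 0" if "w \<noteq> [i,j]" "w \<noteq> [j,i]" for w using that by (simp add: u)
  have "{w. u w \<noteq> 0} \<subseteq> {[i,j],[j,i]}" using uo by blast
  then have fin: "finite {w. u w \<noteq> 0}" by (rule finite_subset) simp
  have ulen: "u w = 0" if "length w \<noteq> 2" for w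
  proof -
    have "w \<noteq> [i,j]" "w \<noteq> [j,i]" using that by auto
    then show ?thesis by (rule uo)
  qed
  have low: "\<forall>w. length w < 2 \<longrightarrow> u w = 0" using ulen by simp
  have th: "thom m u = (if m = 2 then u else (\<lambda>_. 0))" for m
    using ulen by (auto simp: thom_def fun_eq_iff)
  have "(\<forall>m\<ge>2. qsymm p m (thom m u) = (\<lambda>_. 0)) \<longleftrightarrow> (\<forall>v. qsymm p 2 u v = 0)"
  proof
    assume "\<forall>m\<ge>2. qsymm p m (thom m u) = (\<lambda>_. 0)"
    then have "qsymm p 2 (thom 2 u) = (\<lambda>_. 0)" by blast
    then show "\<forall>v. qsymm p 2 u v = 0" unfolding th by simp
  next
    assume h: "\<forall>v. qsymm p 2 u v = 0"
    show "\<forall>m\<ge>2. qsymm p m (thom m u) = (\<lambda>_. 0)"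
    proof (intro allI impI)
      fix m :: nat
      show "qsymm p m (thom m u) = (\<lambda>_. 0)"
      proof (cases "m = 2")
        case True then show ?thesis using h unfolding th by auto
      next
        case False then show ?thesis unfolding th by (simp add: qsymm_zero)
      qed
    qed
  qed
  also have "\<dots> \<longleftrightarrow> c1 - p j i * c2 = 0 \<and> p i j * c1 - c2 = 0"
  proof
    assume h: "\<forall>v. qsymm p 2 u v = 0"
    have "qsymm p 2 u [i,j] = 0" "qsymm p 2 u [j,i] = 0" using h by auto
    then show "c1 - p j i * c2 = 0 \<and> p i j * c1 - c2 = 0"
      unfolding S2 using uij uji by simp
  next
    assume h: "c1 - p j i * c2 = 0 \<and> p i j * c1 - c2 = 0"
    show "\<forall>v. qsymm p 2 u v = 0"
    proof
      fix v :: "'i list"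
      show "qsymm p 2 u v = 0"
      proof (cases "length v = 2")
        case True
        then obtain a b where v: "v = [a,b]" using v2 by blast
        have "u [a,b] + p b a * u [b,a] = 0"
        proof (cases "[a,b] = [i,j]")
          case True
          then have "u [a,b] + p b a * u [b,a] = c1 - p j i * c2" using uij uji by simp
          then show ?thesis using h by simp
        next
          case F1: False show ?thesis
          proof (cases "[a,b] = [j,i]")
            case True
            then have "u [a,b] + p b a * u [b,a] = p i j * c1 - c2" using uij uji by simp
            then show ?thesis using h by simp
          next
            case False then show ?thesis using F1 uo[of "[a,b]"] uo[of "[b,a]"] by auto
          qed
        qed
        then show ?thesis unfolding S2 v by simp
      next
        case False then show ?thesis unfolding S2 by simp
      qed
    qed
  qed
  finally show ?thesis unfolding nichols_zero_def using fin low by simp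
qed

theorem lemma1p4:
  fixes p :: "'i::finite \<Rightarrow> 'i \<Rightarrow> 'a::field_char_0"
    and i j :: 'i
  assumes nonzero: "\<forall>k l. p k l \<noteq> 0"
    and ij: "i \<noteq> j"
  shows "(nichols_zero p (bracketL p i j) \<longleftrightarrow> p i j = 1 \<and> p j i = 1)
       \<and> (nichols_zero p (bracketR p i j) \<longleftrightarrow>
            (p i j = 1 \<and> p j i = 1) \<or>
            (\<exists>\<omega>. primitive_cube_root \<omega> \<and>
               ((p i j = \<omega> \<and> p j i = \<omega>^2) \<or> (p i j = \<omega>^2 \<and> p j i = \<omega>))))"
proof -
  define a where "a = p i j"
  define b where "b = p j i"
  have a0: "a \<noteq> 0" and b0: "b \<noteq> 0" using nonzero by (auto simp: a_def b_def)
  have eqL: "bracketL p i j = (\<lambda>w. (if w = [i,j] then b else 0) - (if w = [j,i] then a else 0))"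
  proof (rule ext)
    fix w :: "'i list"
    show "bracketL p i j w = (if w = [i,j] then b else 0) - (if w = [j,i] then a else 0)"
      unfolding bracketL_def tsmul_def tmul_gen a_def b_def using ij by simp
  qed
  have eqR: "bracketR p i j = (\<lambda>w. (if w = [i,j] then a else 0) - (if w = [j,i] then b else 0))"
  proof (rule ext)
    fix w :: "'i list"
    show "bracketR p i j w = (if w = [i,j] then a else 0) - (if w = [j,i] then b else 0)"
      unfolding bracketR_def tsmul_def tmul_gen a_def b_def using ij by simp
  qed
  have L: "nichols_zero p (bracketL p i j) \<longleftrightarrow> b - b * a = 0 \<and> a * b - a = 0"
    using nz_char[OF ij eqL] by (simp add: a_def b_def mult.commute)
  have R: "nichols_zero p (bracketR p i j) \<longleftrightarrow> a - b * b = 0 \<and> a * a - b = 0"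
    using nz_char[OF ij eqR] by (simp add: a_def b_def)
  have L': "b - b * a = 0 \<and> a * b - a = 0 \<longleftrightarrow> a = 1 \<and> b = 1"
  proof
    assume h: "b - b * a = 0 \<and> a * b - a = 0"
    have "b * (1 - a) = 0" "a * (b - 1) = 0" using h by (auto simp: algebra_simps)
    then show "a = 1 \<and> b = 1" using a0 b0 by auto
  qed auto
  have R': "a - b * b = 0 \<and> a * a - b = 0 \<longleftrightarrow>
      (a = 1 \<and> b = 1) \<or> (\<exists>\<omega>. primitive_cube_root \<omega> \<and> ((a = \<omega> \<and> b = \<omega>^2) \<or> (a = \<omega>^2 \<and> b = \<omega>)))"
  proof
    assume h: "a - b * b = 0 \<and> a * a - b = 0"
    have h1: "a = b * b" using h by (metis right_minus_eq)
    have h2: "b = a * a" using h by (metis right_minus_eq)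
    have bb: "b = a^2" using h2 by (simp add: power2_eq_square)
    have "a * (a * a * a) = a * 1"
    proof -
      have "a * (a * a * a) = (a * a) * (a * a)" by (simp add: mult.assoc)
      also have "\<dots> = b * b" using h2 by simp
      also have "\<dots> = a" using h1 by simp
      finally show ?thesis by simp
    qed
    then have "a * a * a = 1" using a0 mult_left_cancel by blast
    then have a3: "a^3 = 1" by (simp add: power3_eq_cube)
    show "(a = 1 \<and> b = 1) \<or> (\<exists>\<omega>. primitive_cube_root \<omega> \<and> ((a = \<omega> \<and> b = \<omega>^2) \<or> (a = \<omega>^2 \<and> b = \<omega>)))"
    proof (cases "a = 1")
      case True then show ?thesis using bb by simp
    next
      case False
      then have "primitive_cube_root a" using a3 by (simp add: primitive_cube_root_def)
      then show ?thesis using bb by blast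
    qed
  next
    assume "(a = 1 \<and> b = 1) \<or> (\<exists>\<omega>. primitive_cube_root \<omega> \<and> ((a = \<omega> \<and> b = \<omega>^2) \<or> (a = \<omega>^2 \<and> b = \<omega>)))"
    then show "a - b * b = 0 \<and> a * a - b = 0"
    proof
      assume "a = 1 \<and> b = 1" then show ?thesis by simp
    next
      assume "\<exists>\<omega>. primitive_cube_root \<omega> \<and> ((a = \<omega> \<and> b = \<omega>^2) \<or> (a = \<omega>^2 \<and> b = \<omega>))"
      then obtain w where w: "w^3 = 1" and ab: "(a = w \<and> b = w^2) \<or> (a = w^2 \<and> b = w)"
        unfolding primitive_cube_root_def by blast
      have w3: "w * w * w = 1" using w by (simp add: power3_eq_cube)
      have w4: "w * (w * (w * w)) = w"
      proof -
        have "w * (w * (w * w)) = (w * w * w) * w" by (simp add: mult.assoc)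
        then show ?thesis using w3 by simp
      qed
      show ?thesis using ab w4 by (auto simp: power2_eq_square mult.assoc)
    qed
  qed
  show ?thesis using L L' R R' by (simp add: a_def b_def)
qed

end
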